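(* Let $I,J\subset\mathbb{R}$ be open intervals, $M=I\times J$ with coordinates $(u,v)$, let $q,f:I\to\mathbb{R}$ be smooth functions of $u$ and $r,g:J\to\mathbb{R}$ smooth functions of $v$, with $f(u)g(v)(1+q(u)r(v))^2\neq0$ on $M$. Then: (i) there exist smooth $F_1:I\to\mathrm{SL}_2\mathbb{R}$, $F_2:J\to\mathrm{SL}_2\mathbb{R}$ with $F_1^{-1}dF_1=\begin{pmatrix}q&-q^2\\1&-q\end{pmatrix}f\,du$ and $F_2^{-1}dF_2=\begin{pmatrix}r&-r^2\\1&-r\end{pmatrix}g\,dv$, and for any such solution $\varphi=F_1F_2^t:M\to\mathbb{H}^3_1(-1)$ is a conformal timelike immersion of constant mean curvature $\pm1$ whose induced metric is conformal to $(1+qr)^2f g\,du\,dv$; (ii) there exist smooth $F_1:I\to\mathrm{SL}_2\mathbb{R}$, $F_2:J\to\mathrm{SL}_2\mathbb{R}$ with $F_1^{-1}dF_1=\begin{pmatrix}q&-q^2\\1&-q\end{pmatrix}f\,du$ and $(dF_2^{-1})F_2=\begin{pmatrix}r&1\\-r^2&-r\end{pmatrix}g\,dv$, and for any such solution $\psi=F_1F_2^{-1}:M\to\mathbb{H}^3_1(-1)$ is a conformal timelike immersion of constant mean curvature $\pm1$ whose induced metric is conformal to $(1+qr)^2fg\,du\,dv$.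
   Context: $\mathbb{E}^4_2$ is $\mathbb{R}^4$ with metric $-(dx_0)^2-(dx_1)^2+(dx_2)^2+(dx_3)^2$, identified with $M_2(\mathbb{R})$ via $(x_0,x_1,x_2,x_3)\mapsto \begin{pmatrix}x_0+x_3& x_1+x_2\\ -x_1+x_2 & x_0-x_3\end{pmatrix}$, so $\langle u,v\rangle=\tfrac12\{\operatorname{tr}(uv)-\operatorname{tr}u\operatorname{tr}v\}$ and $\mathbb{H}^3_1(-1)=\{\langle x,x\rangle=-1\}=\mathrm{SL}_2\mathbb{R}$. Conformal timelike with null coordinates $(u,v)$: $\langle\varphi_u,\varphi_u\rangle=\langle\varphi_v,\varphi_v\rangle=0\neq\langle\varphi_u,\varphi_v\rangle$. Mean curvature w.r.t. unit normal $N$: $H=2e^{-\omega}\langle\varphi_{uv},N\rangle$ where the metric is $e^\omega du\,dv$; "constant mean curvature $\pm1$" means $H\equiv1$ or $H\equiv-1$ for the chosen unit normal. The metric $(1+qr)^2fg\,du\,dv$ is the induced metric of the timelike minimal surface in Minkowski 3-space with Weierstrass data $(q,f)$, $(r,g)$. *)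

theory Defs
  imports "HOL-Analysis.Analysis"
begin

text \<open>E^4_2 is identified with 2x2 real matrices (real^2^2); the indefinite
inner product is <X,Y> = (tr(XY) - tr X tr Y)/2, so <X,X> = - det X and
H^3_1(-1) = {det X = 1} = SL_2(R).\<close>

definition inner42 :: "real^2^2 \<Rightarrow> real^2^2 \<Rightarrow> real" where
  "inner42 X Y = (trace (X ** Y) - trace X * trace Y) / 2"

definition mat2 :: "real \<Rightarrow> real \<Rightarrow> real \<Rightarrow> real \<Rightarrow> real^2^2" where
  "mat2 a b c d = vector [vector [a, b], vector [c, d]]"

definition smooth_on :: "real set \<Rightarrow> (real \<Rightarrow> 'a::real_normed_vector) \<Rightarrow> bool" where
  "smooth_on S F \<longleftrightarrow>
     (\<forall>n. \<forall>x\<in>S. (((\<lambda>G t. vector_derivative G (at t)) ^^ n) F) differentiable (at x))"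

definition pu :: "(real \<times> real \<Rightarrow> real^2^2) \<Rightarrow> real \<times> real \<Rightarrow> real^2^2" where
  "pu P p = vector_derivative (\<lambda>s. P (s, snd p)) (at (fst p))"

definition pv :: "(real \<times> real \<Rightarrow> real^2^2) \<Rightarrow> real \<times> real \<Rightarrow> real^2^2" where
  "pv P p = vector_derivative (\<lambda>t. P (fst p, t)) (at (snd p))"

definition meancurv :: "(real \<times> real \<Rightarrow> real^2^2) \<Rightarrow> (real \<times> real \<Rightarrow> real^2^2) \<Rightarrow> real \<times> real \<Rightarrow> real" where
  "meancurv P N p = 2 * inner42 (pv (pu P) p) (N p) / (2 * inner42 (pu P p) (pv P p))"

definition cmc_conformal_timelike :: "(real \<times> real) set \<Rightarrow> (real \<times> real \<Rightarrow> real^2^2) \<Rightarrow> bool" where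
  "cmc_conformal_timelike M P \<longleftrightarrow>
     (\<forall>p\<in>M. P differentiable (at p) \<and> det (P p) = 1
        \<and> (\<lambda>t. pu P (fst p, t)) differentiable (at (snd p))
        \<and> inner42 (pu P p) (pu P p) = 0 \<and> inner42 (pv P p) (pv P p) = 0
        \<and> inner42 (pu P p) (pv P p) \<noteq> 0)
   \<and> (\<exists>N. continuous_on M N
        \<and> (\<forall>p\<in>M. inner42 (N p) (N p) = 1 \<and> inner42 (N p) (P p) = 0
                 \<and> inner42 (N p) (pu P p) = 0 \<and> inner42 (N p) (pv P p) = 0)
        \<and> ((\<forall>p\<in>M. meancurv P N p = 1) \<or> (\<forall>p\<in>M. meancurv P N p = -1)))"

definition metric_conformal_to ::
  "(real \<times> real) set \<Rightarrow> (real \<times> real \<Rightarrow> real^2^2) \<Rightarrow> (real \<Rightarrow> real) \<Rightarrow> (real \<Rightarrow> real)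
     \<Rightarrow> (real \<Rightarrow> real) \<Rightarrow> (real \<Rightarrow> real) \<Rightarrow> bool" where
  "metric_conformal_to M P q f r g \<longleftrightarrow>
     (\<exists>\<rho>::real \<times> real \<Rightarrow> real. \<forall>p\<in>M. \<rho> p > 0 \<and>
        2 * inner42 (pu P p) (pv P p)
          = \<rho> p * ((1 + q (fst p) * r (snd p))^2 * f (fst p) * g (snd p)))"

definition sol_left :: "real set \<Rightarrow> (real \<Rightarrow> real) \<Rightarrow> (real \<Rightarrow> real) \<Rightarrow> (real \<Rightarrow> real^2^2) \<Rightarrow> bool" where
  "sol_left I q f F \<longleftrightarrow> smooth_on I F \<and>
     (\<forall>u\<in>I. det (F u) = 1 \<and>
        (\<exists>D. (F has_vector_derivative D) (at u) \<and>
             matrix_inv (F u) ** D = f u *\<^sub>R (mat2 (q u) (- ((q u)^2)) 1 (- (q u)))))"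

definition sol_right :: "real set \<Rightarrow> (real \<Rightarrow> real) \<Rightarrow> (real \<Rightarrow> real) \<Rightarrow> (real \<Rightarrow> real^2^2) \<Rightarrow> bool" where
  "sol_right J r g F \<longleftrightarrow> smooth_on J F \<and>
     (\<forall>v\<in>J. det (F v) = 1 \<and>
        (\<exists>D. ((\<lambda>t. matrix_inv (F t)) has_vector_derivative D) (at v) \<and>
             D ** F v = g v *\<^sub>R (mat2 (r v) 1 (- ((r v)^2)) (- (r v)))))"

end

theory Submission
  imports Defs
begin


lemma mat2_nth [simp]:
  "mat2 a b c d $ 1 $ 1 = a" "mat2 a b c d $ 1 $ 2 = b"
  "mat2 a b c d $ 2 $ 1 = c" "mat2 a b c d $ 2 $ 2 = d"
  by (simp_all add: mat2_def)

lemma mat2_eq_iff: "(A::real^2^2) = B \<longleftrightarrow>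
   A$1$1 = B$1$1 \<and> A$1$2 = B$1$2 \<and> A$2$1 = B$2$1 \<and> A$2$2 = B$2$2"
  by (auto simp: vec_eq_iff forall_2)

lemma mat2_expand: "(A::real^2^2) = mat2 (A$1$1) (A$1$2) (A$2$1) (A$2$2)"
  by (simp add: mat2_eq_iff)

lemma mult_nth [simp]: "((A::real^2^2) ** B) $ i $ j = A$i$1 * B$1$j + A$i$2 * B$2$j"
  by (simp add: matrix_matrix_mult_def sum_2)

lemma transpose_nth [simp]: "transpose (A::real^2^2) $ i $ j = A $ j $ i"
  by (simp add: transpose_def)

lemma mat1_nth [simp]: "(mat 1 :: real^2^2) $ 1 $ 1 = 1" "(mat 1 :: real^2^2) $ 2 $ 2 = 1"
   "(mat 1 :: real^2^2) $ 1 $ 2 = 0" "(mat 1 :: real^2^2) $ 2 $ 1 = 0"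
  by (simp_all add: mat_def)

lemma det2: "det (A::real^2^2) = A$1$1 * A$2$2 - A$1$2 * A$2$1"
  by (rule det_2)

lemma trace2: "trace (A::real^2^2) = A$1$1 + A$2$2"
  by (simp add: trace_def sum_2)

lemma inner42_expand: "inner42 A B =
   ((A$1$1 * B$1$1 + A$1$2 * B$2$1 + A$2$1 * B$1$2 + A$2$2 * B$2$2)
     - (A$1$1 + A$2$2) * (B$1$1 + B$2$2)) / 2"
  by (simp add: inner42_def trace2)

lemma inner42_det: "inner42 A B = - (det (A + B) - det A - det B) / 2"
  by (simp add: inner42_expand det2 algebra_simps)

lemma inner42_inv:
  assumes "det L = 1" "det R = 1"
  shows "inner42 (L ** A ** R) (L ** B ** R) = inner42 A B"
proof -
  have "L ** A ** R + L ** B ** R = L ** (A + B) ** R"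
    by (simp add: mat2_eq_iff algebra_simps)
  then show ?thesis unfolding inner42_det by (simp add: det_mul assms)
qed

lemma bb_mult: "bounded_bilinear ((**) :: real^2^2 \<Rightarrow> real^2^2 \<Rightarrow> real^2^2)"
  unfolding bilinear_conv_bounded_bilinear[symmetric] bilinear_def linear_iff
  by (simp add: mat2_eq_iff algebra_simps)

definition adj2 :: "real^2^2 \<Rightarrow> real^2^2" where
  "adj2 A = mat2 (A$2$2) (- A$1$2) (- A$2$1) (A$1$1)"

lemma matrix_inv_det1:
  assumes "det (A::real^2^2) = 1"
  shows "matrix_inv A = adj2 A" "A ** matrix_inv A = mat 1" "matrix_inv A ** A = mat 1"
proof -
  have h: "A ** adj2 A = mat 1 \<and> adj2 A ** A = mat 1"
    using assms by (simp add: mat2_eq_iff adj2_def det2 algebra_simps)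
  have u: "B = adj2 A" if "A ** B = mat 1 \<and> B ** A = mat 1" for B
  proof -
    have "B = B ** (A ** adj2 A)" using h by simp
    also have "\<dots> = (B ** A) ** adj2 A" by (simp add: matrix_mul_assoc)
    also have "\<dots> = adj2 A" using that by simp
    finally show ?thesis .
  qed
  have "matrix_inv A = adj2 A"
    unfolding matrix_inv_def using h u by (metis (mono_tags, lifting) someI_ex)
  then show "matrix_inv A = adj2 A" "A ** matrix_inv A = mat 1" "matrix_inv A ** A = mat 1"
    using h by auto
qed

lemma det_adj2: "det (adj2 A) = det A"
  by (simp add: adj2_def det2)

lemma mat2_mult: "mat2 a b c d ** mat2 a' b' c' d' = mat2 (a*a'+b*c') (a*b'+b*d') (c*a'+d*c') (c*b'+d*d')"
  by (simp add: mat2_eq_iff)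


fun Ck :: "nat \<Rightarrow> real set \<Rightarrow> (real \<Rightarrow> 'a::real_normed_vector) \<Rightarrow> bool" where
  "Ck 0 S F = True"
| "Ck (Suc k) S F = (\<exists>F'. (\<forall>x\<in>S. (F has_vector_derivative F' x) (at x)) \<and> Ck k S F')"

lemma Ck_cong:
  assumes "open S" "\<And>x. x \<in> S \<Longrightarrow> F x = G x" "Ck k S F"
  shows "Ck k S G"
  using assms(2,3)
proof (induction k arbitrary: F G)
  case 0 then show ?case by simp
next
  case (Suc k)
  then obtain F' where F': "\<forall>x\<in>S. (F has_vector_derivative F' x) (at x)" "Ck k S F'" by auto
  have "\<forall>x\<in>S. (G has_vector_derivative F' x) (at x)"
    using F'(1) Suc.prems(1) assms(1) has_vector_derivative_transform_within_open by blast
  then show ?case using F'(2) by auto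
qed

lemma Ck_Suc_imp: "Ck (Suc k) S F \<Longrightarrow> Ck k S F"
proof (induction k arbitrary: F)
  case 0 then show ?case by simp
next
  case (Suc k)
  then obtain F' where "\<forall>x\<in>S. (F has_vector_derivative F' x) (at x)" "Ck (Suc k) S F'"
    by (metis Ck.simps(2))
  with Suc.IH show ?case by auto
qed

lemma Ck_mono: "Ck (k + m) S F \<Longrightarrow> Ck k S F"
  by (induction m) (auto simp del: Ck.simps dest: Ck_Suc_imp)

lemma Ck_const: "Ck k S (\<lambda>x. c)"
proof (induction k arbitrary: c)
  case 0 then show ?case by simp
next
  case (Suc k)
  have "\<forall>x\<in>S. ((\<lambda>x. c) has_vector_derivative (\<lambda>x. 0) x) (at x)" by (auto intro: derivative_eq_intros)
  then show ?case using Suc.IH[of 0] by (intro Ck.simps(2)[THEN iffD2] exI[of _ "\<lambda>x. 0"]) auto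
qed

lemma Ck_add:
  assumes "Ck k S F" "Ck k S G"
  shows "Ck k S (\<lambda>x. F x + G x)"
  using assms
proof (induction k arbitrary: F G)
  case 0 then show ?case by simp
next
  case (Suc k)
  then obtain F' G' where F': "\<forall>x\<in>S. (F has_vector_derivative F' x) (at x)" "Ck k S F'"
    and G': "\<forall>x\<in>S. (G has_vector_derivative G' x) (at x)" "Ck k S G'" by auto
  have "\<forall>x\<in>S. ((\<lambda>x. F x + G x) has_vector_derivative (\<lambda>x. F' x + G' x) x) (at x)"
    using F' G' by (auto intro: has_vector_derivative_add)
  then show ?case using Suc.IH[OF F'(2) G'(2)] by (intro Ck.simps(2)[THEN iffD2] exI[of _ "\<lambda>x. F' x + G' x"]) auto
qed

lemma Ck_linear:
  assumes "bounded_linear L" "Ck k S F"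
  shows "Ck k S (\<lambda>x. L (F x))"
  using assms(2)
proof (induction k arbitrary: F)
  case 0 then show ?case by simp
next
  case (Suc k)
  then obtain F' where F': "\<forall>x\<in>S. (F has_vector_derivative F' x) (at x)" "Ck k S F'" by auto
  have "\<forall>x\<in>S. ((\<lambda>x. L (F x)) has_vector_derivative (\<lambda>x. L (F' x)) x) (at x)"
    using F' bounded_linear.has_vector_derivative[OF assms(1)] by auto
  then show ?case using Suc.IH[OF F'(2)] by (intro Ck.simps(2)[THEN iffD2] exI[of _ "\<lambda>x. L (F' x)"]) auto
qed

lemma Ck_bilinear:
  assumes "bounded_bilinear bp" "Ck k S F" "Ck k S G"
  shows "Ck k S (\<lambda>x. bp (F x) (G x))"
  using assms(2,3)
proof (induction k arbitrary: F G)
  case 0 then show ?case by simp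
next
  case (Suc k)
  then obtain F' G' where F': "\<forall>x\<in>S. (F has_vector_derivative F' x) (at x)" "Ck k S F'"
    and G': "\<forall>x\<in>S. (G has_vector_derivative G' x) (at x)" "Ck k S G'" by auto
  have "\<forall>x\<in>S. ((\<lambda>x. bp (F x) (G x)) has_vector_derivative
          (\<lambda>x. bp (F x) (G' x) + bp (F' x) (G x)) x) (at x)"
    using F' G' bounded_bilinear.has_vector_derivative[OF assms(1)] by auto
  moreover have "Ck k S (\<lambda>x. bp (F x) (G' x) + bp (F' x) (G x))"
  proof -
    have a: "Ck k S F" "Ck k S G" using Suc.prems Ck_Suc_imp by blast+
    show ?thesis by (rule Ck_add[OF Suc.IH[OF a(1) G'(2)] Suc.IH[OF F'(2) a(2)]])
  qed
  ultimately show ?case by (intro Ck.simps(2)[THEN iffD2] exI[of _ "\<lambda>x. bp (F x) (G' x) + bp (F' x) (G x)"]) auto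
qed

abbreviation Dv :: "(real \<Rightarrow> 'a::real_normed_vector) \<Rightarrow> real \<Rightarrow> 'a" where
  "Dv G \<equiv> (\<lambda>t. vector_derivative G (at t))"

lemma smooth_imp_Ck:
  assumes "smooth_on S F"
  shows "Ck k S ((Dv ^^ n) F)"
proof (induction k arbitrary: n)
  case 0 then show ?case by simp
next
  case (Suc k)
  have "\<forall>x\<in>S. ((Dv ^^ n) F has_vector_derivative ((Dv ^^ Suc n) F) x) (at x)"
    using assms unfolding smooth_on_def by (auto simp: vector_derivative_works)
  then show ?case using Suc.IH[of "Suc n"] by auto
qed

lemma Ck_Dv:
  assumes "open S" "Ck (Suc k) S F"
  shows "Ck k S (Dv F)"
proof -
  obtain F' where F': "\<forall>x\<in>S. (F has_vector_derivative F' x) (at x)" "Ck k S F'" using assms(2) by auto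
  show ?thesis
    by (rule Ck_cong[OF assms(1) _ F'(2)]) (use F'(1) vector_derivative_at in metis)
qed

lemma Ck_imp_smooth:
  assumes "open S" "\<And>k. Ck k S F"
  shows "smooth_on S F"
proof -
  have "\<And>k. Ck k S ((Dv ^^ n) F)" for n
    using assms(2)
  proof (induction n arbitrary: F)
    case 0 then show ?case by simp
  next
    case (Suc n)
    have "\<And>k. Ck k S (Dv F)" using Ck_Dv[OF assms(1)] Suc.prems by blast
    from Suc.IH[OF this] show ?case by (simp add: funpow_Suc_right del: funpow.simps)
  qed
  then have "\<forall>x\<in>S. ((Dv ^^ n) F) differentiable (at x)" for n
    using Ck.simps(2)[of 0 S "(Dv ^^ n) F"] by (auto simp: vector_derivative_works[symmetric] intro: differentiableI_vector)
  then show ?thesis unfolding smooth_on_def by blast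
qed

lemma smooth_iff_Ck: "open S \<Longrightarrow> smooth_on S F \<longleftrightarrow> (\<forall>k. Ck k S F)"
  using smooth_imp_Ck[of S F _ 0] Ck_imp_smooth by auto

lemma Ck1_deriv: "Ck (Suc k) S F \<Longrightarrow> x \<in> S \<Longrightarrow> \<exists>D. (F has_vector_derivative D) (at x)"
  by auto

lemma smooth_cont: "open S \<Longrightarrow> smooth_on S F \<Longrightarrow> continuous_on S F"
  by (metis Ck.simps(2) continuous_at_imp_continuous_on has_vector_derivative_continuous smooth_iff_Ck)


lemma interval_around:
  fixes I :: "real set"
  assumes "open I" "is_interval I" "u \<in> I" "u0 \<in> I"
  obtains a b where "a < min u u0" "max u u0 < b" "{a..b} \<subseteq> I"
proof -
  obtain e1 where e1: "e1 > 0" "ball u e1 \<subseteq> I" using assms(1,3) open_contains_ball by blast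
  obtain e2 where e2: "e2 > 0" "ball u0 e2 \<subseteq> I" using assms(1,4) open_contains_ball by blast
  define d where "d = min e1 e2 / 2"
  have d: "d > 0" "d < e1" "d < e2" using e1 e2 by (auto simp: d_def)
  define a where "a = min u u0 - d"
  define b where "b = max u u0 + d"
  have aI: "a \<in> I"
  proof (cases "u \<le> u0")
    case True then have "a \<in> ball u e1" using d by (auto simp: a_def dist_real_def)
    then show ?thesis using e1 by blast
  next
    case False then have "a \<in> ball u0 e2" using d by (auto simp: a_def dist_real_def)
    then show ?thesis using e2 by blast
  qed
  have bI: "b \<in> I"
  proof (cases "u \<le> u0")
    case True then have "b \<in> ball u0 e2" using d by (auto simp: b_def dist_real_def)
    then show ?thesis using e2 by blast
  next
    case False then have "b \<in> ball u e1" using d by (auto simp: b_def dist_real_def)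
    then show ?thesis using e1 by blast
  qed
  have "{a..b} \<subseteq> I"
  proof
    fix x assume "x \<in> {a..b}"
    then show "x \<in> I" using is_interval_1[THEN iffD1, OF assms(2), rule_format, OF aI bI, of x] by simp
  qed
  moreover have "a < min u u0" "max u u0 < b" unfolding a_def b_def using d by (auto simp: min_def max_def)
  ultimately show ?thesis by (rule that[rotated 2])
qed

lemma antideriv:
  fixes h :: "real \<Rightarrow> 'a::banach"
  assumes "open I" "is_interval I" "u0 \<in> I" "continuous_on I h"
  shows "\<exists>H. H u0 = 0 \<and> (\<forall>u\<in>I. (H has_vector_derivative h u) (at u))"
proof -
  define H where "H u = (if u0 \<le> u then integral {u0..u} h else - integral {u..u0} h)" for u
  have "(H has_vector_derivative h u) (at u)" if u: "u \<in> I" for u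
  proof -
    obtain a b where ab: "a < min u u0" "max u u0 < b" "{a..b} \<subseteq> I"
      using interval_around[OF assms(1,2) u assms(3)] by blast
    have hc: "continuous_on {a..b} h" using assms(4) ab(3) continuous_on_subset by blast
    have hi: "h integrable_on {a..b}" using hc integrable_continuous_real by blast
    have eq: "H x = integral {a..x} h - integral {a..u0} h" if x: "x \<in> {a<..<b}" for x
    proof (cases "u0 \<le> x")
      case True
      have "h integrable_on {a..x}" using hi x by (auto intro: integrable_subinterval_real)
      then have "integral {a..u0} h + integral {u0..x} h = integral {a..x} h"
        using Henstock_Kurzweil_Integration.integral_combine[of a u0 x h] ab True x \<open>h integrable_on {a..x}\<close> by simp
      then show ?thesis using True by (simp add: H_def algebra_simps)
    next
      case False
      have "h integrable_on {a..u0}" using hi ab by (auto intro: integrable_subinterval_real)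
      then have "integral {a..x} h + integral {x..u0} h = integral {a..u0} h"
        using Henstock_Kurzweil_Integration.integral_combine[of a x u0 h] ab False x \<open>h integrable_on {a..u0}\<close> by simp
      then show ?thesis using False by (simp add: H_def algebra_simps)
    qed
    have "((\<lambda>x. integral {a..x} h) has_vector_derivative h u) (at u within {a..b})"
      using ab by (intro integral_has_vector_derivative hc) auto
    then have "((\<lambda>x. integral {a..x} h) has_vector_derivative h u) (at u within {a<..<b})"
      by (rule has_vector_derivative_within_subset) auto
    then have "((\<lambda>x. integral {a..x} h) has_vector_derivative h u) (at u)"
      using ab by (subst (asm) has_vector_derivative_within_open) auto
    then have "((\<lambda>x. integral {a..x} h - integral {a..u0} h) has_vector_derivative h u) (at u)"
      by (simp add: has_vector_derivative_diff_const)
    then show ?thesis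
      by (rule has_vector_derivative_transform_within_open[where S="{a<..<b}"]) (use ab eq in auto)
  qed
  moreover have "H u0 = 0" by (simp add: H_def)
  ultimately show ?thesis by blast
qed

primrec Tn :: "real set \<Rightarrow> real \<Rightarrow> (real \<Rightarrow> real^2^2) \<Rightarrow> nat \<Rightarrow> real \<Rightarrow> real^2^2" where
  "Tn I u0 X 0 = (\<lambda>u. mat 1)"
| "Tn I u0 X (Suc n) = (SOME H. H u0 = 0 \<and>
      (\<forall>u\<in>I. (H has_vector_derivative (Tn I u0 X n u ** X u)) (at u)))"

lemma Tn_step:
  assumes "open I" "is_interval I" "u0 \<in> I" "continuous_on I X" "continuous_on I (Tn I u0 X n)"
  shows "Tn I u0 X (Suc n) u0 = 0 \<and>
      (\<forall>u\<in>I. (Tn I u0 X (Suc n) has_vector_derivative (Tn I u0 X n u ** X u)) (at u))"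
proof -
  have "continuous_on I (\<lambda>u. Tn I u0 X n u ** X u)"
    using bounded_bilinear.continuous_on[OF bb_mult assms(5,4)] .
  from antideriv[OF assms(1-3) this] show ?thesis
    unfolding Tn.simps by (rule someI_ex)
qed

lemma Tn_cont:
  assumes "open I" "is_interval I" "u0 \<in> I" "continuous_on I X"
  shows "continuous_on I (Tn I u0 X n)"
proof (induction n)
  case 0 then show ?case by (simp add: continuous_on_const)
next
  case (Suc n)
  from Tn_step[OF assms Suc] show ?case
    by (meson continuous_at_imp_continuous_on has_vector_derivative_continuous)
qed

lemma Tn_props:
  assumes "open I" "is_interval I" "u0 \<in> I" "continuous_on I X"
  shows "Tn I u0 X (Suc n) u0 = 0"
    "\<And>u. u \<in> I \<Longrightarrow> (Tn I u0 X (Suc n) has_vector_derivative (Tn I u0 X n u ** X u)) (at u)"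
  using Tn_step[OF assms Tn_cont[OF assms]] by auto

lemma fact_aux: "(K::real) * C ^ n / fact n * C * y = K * C ^ Suc n / fact (Suc n) * (real (Suc n) * y)"
proof -
  have f: "fact (Suc n) = real (Suc n) * fact n" by simp
  have p: "(fact n :: real) > 0" "real (Suc n) > 0" by auto
  show ?thesis unfolding f using p by (simp add: field_simps del: of_nat_Suc)
qed

lemma Tn_bound:
  assumes A: "open I" "is_interval I" "u0 \<in> I" "continuous_on I X"
    and ab: "{a..b} \<subseteq> I" "u0 \<in> {a..b}" and C: "C \<ge> 0"
    and CX: "\<And>s M. s \<in> {a..b} \<Longrightarrow> norm ((M::real^2^2) ** X s) \<le> C * norm M"
  shows "x \<in> {a..b} \<Longrightarrow> norm (Tn I u0 X n x) \<le> norm (mat 1 :: real^2^2) * C^n * \<bar>x - u0\<bar>^n / fact n"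
proof (induction n arbitrary: x)
  case 0 then show ?case by simp
next
  case (Suc n)
  define N0 where "N0 = norm (mat 1 :: real^2^2)"
  define K where "K = N0 * C ^ Suc n / fact (Suc n)"
  have K0: "K \<ge> 0" using C by (simp add: K_def N0_def)
  let ?f = "Tn I u0 X (Suc n)"
  have cf: "continuous_on I ?f" using Tn_cont[OF A] .
  have der: "\<And>s. s \<in> I \<Longrightarrow> (?f has_vector_derivative (Tn I u0 X n s ** X s)) (at s)"
    using Tn_props(2)[OF A] .
  have bnd: "norm (Tn I u0 X n s ** X s) \<le> K * (real (Suc n) * \<bar>s - u0\<bar> ^ n)" if s: "s \<in> {a..b}" for s
  proof -
    have "norm (Tn I u0 X n s ** X s) \<le> C * norm (Tn I u0 X n s)" using CX s by blast
    also have "\<dots> \<le> C * (N0 * C^n * \<bar>s - u0\<bar>^n / fact n)"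
      using Suc.IH[OF s] C by (intro mult_left_mono) (auto simp: N0_def)
    also have "\<dots> = K * (real (Suc n) * \<bar>s - u0\<bar> ^ n)"
      using fact_aux[of N0 C n "\<bar>s - u0\<bar> ^ n"] by (simp add: K_def mult.commute)
    finally show ?thesis .
  qed
  have sub: "{y..z} \<subseteq> I" if "y \<in> {a..b}" "z \<in> {a..b}" for y z
    using that ab by auto
  show ?case
  proof (cases x u0 rule: linorder_cases)
    case equal
    then show ?thesis using Tn_props(1)[OF A] by simp
  next
    case greater
    have "norm (?f x - ?f u0) \<le> K * (x - u0) ^ Suc n - K * (u0 - u0) ^ Suc n"
    proof (rule differentiable_bound_general[OF greater])
      show "continuous_on {u0..x} ?f" using cf sub[OF ab(2) Suc.prems] continuous_on_subset by blast
      show "continuous_on {u0..x} (\<lambda>s. K * (s - u0) ^ Suc n)" by (intro continuous_intros)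
      fix s assume s: "u0 < s" "s < x"
      then have sab: "s \<in> {a..b}" using ab Suc.prems by auto
      show "(?f has_vector_derivative (Tn I u0 X n s ** X s)) (at s)" using der sab ab by blast
      have "((\<lambda>s. K * (s - u0) ^ Suc n) has_real_derivative K * (real (Suc n) * (s - u0) ^ n)) (at s)"
        by (rule derivative_eq_intros refl | simp)+
      then show "((\<lambda>s. K * (s - u0) ^ Suc n) has_vector_derivative K * (real (Suc n) * (s - u0) ^ n)) (at s)"
        by (simp add: has_real_derivative_iff_has_vector_derivative)
      show "norm (Tn I u0 X n s ** X s) \<le> K * (real (Suc n) * (s - u0) ^ n)"
        using bnd[OF sab] s by simp
    qed
    then show ?thesis using greater Tn_props(1)[OF A] by (simp add: K_def N0_def)
  next
    case less
    have "norm (?f u0 - ?f x) \<le> (- K * (u0 - u0) ^ Suc n) - (- K * (u0 - x) ^ Suc n)"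
    proof (rule differentiable_bound_general[OF less])
      show "continuous_on {x..u0} ?f" using cf sub[OF Suc.prems ab(2)] continuous_on_subset by blast
      show "continuous_on {x..u0} (\<lambda>s. - K * (u0 - s) ^ Suc n)" by (intro continuous_intros)
      fix s assume s: "x < s" "s < u0"
      then have sab: "s \<in> {a..b}" using ab Suc.prems by auto
      show "(?f has_vector_derivative (Tn I u0 X n s ** X s)) (at s)" using der sab ab by blast
      have "((\<lambda>s. - K * (u0 - s) ^ Suc n) has_real_derivative K * (real (Suc n) * (u0 - s) ^ n)) (at s)"
        by (rule derivative_eq_intros refl | simp)+
      then show "((\<lambda>s. - K * (u0 - s) ^ Suc n) has_vector_derivative K * (real (Suc n) * (u0 - s) ^ n)) (at s)"
        by (simp add: has_real_derivative_iff_has_vector_derivative)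
      show "norm (Tn I u0 X n s ** X s) \<le> K * (real (Suc n) * (u0 - s) ^ n)"
        using bnd[OF sab] s by simp
    qed
    then show ?thesis using less Tn_props(1)[OF A] by (simp add: K_def N0_def norm_minus_commute)
  qed
qed


lemma ode_exists:
  fixes X :: "real \<Rightarrow> real^2^2"
  assumes A: "open I" "is_interval I" "u0 \<in> I" "continuous_on I X"
  shows "\<exists>F. F u0 = mat 1 \<and> (\<forall>u\<in>I. (F has_vector_derivative F u ** X u) (at u))"
proof -
  define T where "T = Tn I u0 X"
  define F where "F x = (\<Sum>n. T n x)" for x
  have "(\<lambda>n. T n u0) = (\<lambda>n. if n = 0 then mat 1 else 0)"
    by (rule ext, case_tac n) (auto simp: T_def Tn_props(1)[OF A] simp del: Tn.simps(2))
  then have "(\<lambda>n. T n u0) sums mat 1" using sums_single[of 0 "\<lambda>_. mat 1 :: real^2^2"] by simp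
  then have F0: "F u0 = mat 1" unfolding F_def by (simp add: sums_iff)
  obtain K0 where K0': "K0 > 0 \<and> (\<forall>P Q. norm ((P::real^2^2) ** (Q::real^2^2)) \<le> norm P * norm Q * K0)"
    using bounded_bilinear.pos_bounded[OF bb_mult] by (elim exE) (rule that)
  note K0 = K0'[THEN conjunct1] K0'[THEN conjunct2, rule_format]
  have "(F has_vector_derivative F u ** X u) (at u)" if u: "u \<in> I" for u
  proof -
    obtain a b where ab: "a < min u u0" "max u u0 < b" "{a..b} \<subseteq> I"
      using interval_around[OF A(1,2) u A(3)] by blast
    have "compact (X ` {a..b})"
      using compact_continuous_image[OF continuous_on_subset[OF A(4) ab(3)]] by simp
    then have "bounded (X ` {a..b})" by (rule compact_imp_bounded)
    then obtain B where B': "B > 0 \<and> (\<forall>y\<in>X ` {a..b}. norm y \<le> B)"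
      unfolding bounded_pos by (elim exE) (rule that)
    have B: "B > 0" "\<And>s. s \<in> {a..b} \<Longrightarrow> norm (X s) \<le> B" using B' by auto
    define C where "C = B * K0"
    have C: "C \<ge> 0" using B K0 by (simp add: C_def)
    have CX: "norm ((M::real^2^2) ** X s) \<le> C * norm M" if "s \<in> {a..b}" for s M
    proof -
      have "norm (M ** X s) \<le> norm M * norm (X s) * K0" by (rule K0(2))
      also have "\<dots> \<le> norm M * B * K0"
        using B(2)[OF that] K0 by (intro mult_right_mono mult_left_mono) auto
      finally show ?thesis by (simp add: C_def mult_ac)
    qed
    define S where "S = {a<..<b}"
    have SI: "S \<subseteq> {a..b}" by (auto simp: S_def)
    have uS: "u \<in> S" using ab by (auto simp: S_def)
    define N0 where "N0 = norm (mat 1 :: real^2^2)"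
    define M where "M n = N0 * (C * (b - a)) ^ n / fact n" for n
    have TM: "norm (T n x) \<le> M n" if x: "x \<in> {a..b}" for n x
    proof -
      have "norm (T n x) \<le> N0 * C^n * \<bar>x - u0\<bar>^n / fact n"
        unfolding T_def N0_def
        by (rule Tn_bound[OF A ab(3) _ C CX x]) (use ab in auto)
      also have "\<dots> \<le> M n"
      proof -
        have "\<bar>x - u0\<bar> \<le> b - a" using x ab by auto
        then have "C^n * \<bar>x - u0\<bar>^n \<le> C^n * (b - a)^n"
          using C by (intro mult_left_mono power_mono) auto
        then have h1: "N0 * (C^n * \<bar>x - u0\<bar>^n) \<le> N0 * (C^n * (b - a)^n)"
          by (rule mult_left_mono) (auto simp: N0_def)
        have h2: "N0 * (C^n * \<bar>x - u0\<bar>^n) / fact n \<le> N0 * (C^n * (b - a)^n) / fact n"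
          using h1 by (rule divide_right_mono) simp
        then show ?thesis unfolding M_def by (simp add: power_mult_distrib mult.assoc)
      qed
      finally show ?thesis .
    qed
    have sM: "summable M"
    proof -
      have "summable (\<lambda>n. N0 * (inverse (fact n) * (C * (b - a)) ^ n))"
        by (intro summable_mult summable_exp)
      then show ?thesis unfolding M_def by (simp add: field_simps)
    qed
    have ul: "uniform_limit S (\<lambda>n x. \<Sum>i<n. T i x) F sequentially"
      unfolding F_def by (rule Weierstrass_m_test[OF _ sM]) (use TM SI in auto)
    have summ: "summable (\<lambda>n. T n x)" if "x \<in> {a..b}" for x
      by (rule summable_comparison_test'[OF sM]) (use TM that in auto)
    define D where "D n x = (case n of 0 \<Rightarrow> 0 | Suc m \<Rightarrow> T m x ** X x)" for n x
    have derT: "(T n has_derivative (\<lambda>h. h *\<^sub>R D n x)) (at x within S)" if x: "x \<in> S" for n x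
    proof (cases n)
      case 0
      then show ?thesis by (simp add: T_def D_def)
    next
      case (Suc m)
      have "x \<in> I" using x SI ab by auto
      then have "(T n has_vector_derivative D n x) (at x)"
        using Tn_props(2)[OF A, of x m] by (simp add: T_def D_def Suc)
      then show ?thesis unfolding has_vector_derivative_def by (rule has_derivative_at_withinI)
    qed
    have unif: "\<forall>\<^sub>F n in sequentially. \<forall>x\<in>S. \<forall>h. norm ((\<Sum>i<n. h *\<^sub>R D i x) - h *\<^sub>R (F x ** X x)) \<le> e * norm h"
      if e: "e > 0" for e
    proof -
      define e' where "e' = e / (C + 1)"
      have e': "e' > 0" using e C by (simp add: e'_def)
      obtain N where N: "\<And>m x. m \<ge> N \<Longrightarrow> x \<in> S \<Longrightarrow> dist (\<Sum>i<m. T i x) (F x) < e'"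
        using uniform_limitD[OF ul e'] unfolding eventually_sequentially by blast
      have "norm ((\<Sum>i<n. h *\<^sub>R D i x) - h *\<^sub>R (F x ** X x)) \<le> e * norm h"
        if n: "n \<ge> Suc N" and x: "x \<in> S" for n x h
      proof -
        obtain m where m: "n = Suc m" "m \<ge> N" using n by (cases n) auto
        have "(\<Sum>i<n. D i x) = (\<Sum>i<m. T i x ** X x)"
          unfolding m(1) sum.lessThan_Suc_shift by (simp add: D_def)
        also have "\<dots> = (\<Sum>i<m. T i x) ** X x"
          by (simp add: bounded_bilinear.sum_left[OF bb_mult])
        finally have sD: "(\<Sum>i<n. D i x) = (\<Sum>i<m. T i x) ** X x" .
        have "(\<Sum>i<n. h *\<^sub>R D i x) - h *\<^sub>R (F x ** X x) = h *\<^sub>R (((\<Sum>i<m. T i x) - F x) ** X x)"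
          by (simp add: scaleR_sum_right[symmetric] sD scaleR_diff_right bounded_bilinear.diff_left[OF bb_mult])
        then have "norm ((\<Sum>i<n. h *\<^sub>R D i x) - h *\<^sub>R (F x ** X x)) = \<bar>h\<bar> * norm (((\<Sum>i<m. T i x) - F x) ** X x)"
          by simp
        also have "\<dots> \<le> \<bar>h\<bar> * (C * norm ((\<Sum>i<m. T i x) - F x))"
          using CX x SI by (intro mult_left_mono) auto
        also have "\<dots> \<le> \<bar>h\<bar> * (C * e')"
          using N[OF m(2) x] C by (intro mult_left_mono) (auto simp: dist_norm)
        also have "\<dots> \<le> \<bar>h\<bar> * e"
        proof -
          have "C * e' \<le> e" using C e by (simp add: e'_def field_simps)
          then show ?thesis by (intro mult_left_mono) auto
        qed
        finally show ?thesis by (simp add: mult.commute)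
      qed
      then show ?thesis unfolding eventually_sequentially by blast
    qed
    have "\<exists>g. \<forall>x\<in>S. (\<lambda>n. T n x) sums (g x) \<and> (g has_derivative (\<lambda>h. h *\<^sub>R (F x ** X x))) (at x within S)"
    proof (rule has_derivative_series[where f=T and f'="\<lambda>n x h. h *\<^sub>R D n x"])
      show "convex S" by (simp add: S_def)
      have "u \<in> {a..b}" using uS SI by blast
      then show "(\<lambda>n. T n u) sums F u" using summ[of u] unfolding F_def by (simp add: summable_sums)
    qed (use derT unif uS in auto)
    then obtain g where g: "\<And>x. x \<in> S \<Longrightarrow> (\<lambda>n. T n x) sums (g x)"
      "\<And>x. x \<in> S \<Longrightarrow> (g has_derivative (\<lambda>h. h *\<^sub>R (F x ** X x))) (at x within S)" by blast
    have gF: "g x = F x" if "x \<in> S" for x using g(1)[OF that] unfolding F_def by (simp add: sums_iff)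
    have oS: "open S" by (simp add: S_def)
    have "(g has_derivative (\<lambda>h. h *\<^sub>R (F u ** X u))) (at u)"
      using g(2)[OF uS] at_within_open[OF uS oS] by simp
    then have "(F has_derivative (\<lambda>h. h *\<^sub>R (F u ** X u))) (at u)"
      by (rule has_derivative_transform_within_open[OF _ oS uS]) (use gF in auto)
    then show ?thesis by (simp add: has_vector_derivative_def)
  qed
  with F0 show ?thesis by blast
qed


definition amat :: "real \<Rightarrow> real^2^2" where "amat q = mat2 q (- (q^2)) 1 (- q)"
definition bmat :: "real \<Rightarrow> real^2^2" where "bmat r = mat2 r 1 (- (r^2)) (- r)"
definition mmat :: "real \<Rightarrow> real \<Rightarrow> real^2^2" where
  "mmat q r = mat2 (q*r - 1) (2*q) (2*r) (1 - q*r)"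
definition nmat :: "real \<Rightarrow> real \<Rightarrow> real^2^2" where
  "nmat q r = (1/(1+q*r)) *\<^sub>R mmat q r"

lemma inner42_scaleL: "inner42 (c *\<^sub>R A) B = c * inner42 A B"
  by (simp add: inner42_expand algebra_simps add_divide_distrib[symmetric] diff_divide_distrib[symmetric])

lemma inner42_scaleR: "inner42 A (c *\<^sub>R B) = c * inner42 A B"
  by (simp add: inner42_expand algebra_simps add_divide_distrib[symmetric] diff_divide_distrib[symmetric])

lemma alg1: "inner42 (f *\<^sub>R amat q) (f *\<^sub>R amat q) = 0"
  by (simp add: inner42_expand amat_def algebra_simps power2_eq_square)

lemma alg2: "inner42 (g *\<^sub>R bmat r) (g *\<^sub>R bmat r) = 0"
  by (simp add: inner42_expand bmat_def algebra_simps power2_eq_square)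

lemma alg3: "2 * inner42 (f *\<^sub>R amat q) (g *\<^sub>R bmat r) = (1 + q * r)^2 * f * g"
  by (simp add: inner42_expand amat_def bmat_def algebra_simps power2_eq_square)

lemma malg4: "inner42 (mmat q r) (mmat q r) = (1 + q * r)^2"
  by (simp add: inner42_expand mmat_def algebra_simps power2_eq_square)

lemma malg6: "inner42 (mmat q r) (amat q) = 0"
  by (simp add: inner42_expand mmat_def amat_def algebra_simps power2_eq_square)

lemma malg7: "inner42 (mmat q r) (bmat r) = 0"
  by (simp add: inner42_expand mmat_def bmat_def algebra_simps power2_eq_square)

lemma malg8: "2 * inner42 (amat q ** bmat r) (mmat q r) = (1 + q * r)^3"
  by (simp add: inner42_expand mmat_def amat_def bmat_def algebra_simps power2_eq_square power3_eq_cube)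

lemma alg4: "1 + q * r \<noteq> 0 \<Longrightarrow> inner42 (nmat q r) (nmat q r) = 1"
  by (simp add: nmat_def inner42_scaleL inner42_scaleR malg4 power2_eq_square)

lemma malg5: "inner42 (mmat q r) (mat 1) = 0"
  by (simp add: inner42_expand mmat_def)

lemma alg5: "inner42 (nmat q r) (mat 1) = 0"
  by (simp add: nmat_def inner42_scaleL malg5)

lemma alg6: "inner42 (nmat q r) (f *\<^sub>R amat q) = 0"
  by (simp add: nmat_def inner42_scaleL inner42_scaleR malg6)

lemma alg7: "inner42 (nmat q r) (g *\<^sub>R bmat r) = 0"
  by (simp add: nmat_def inner42_scaleL inner42_scaleR malg7)

lemma alg8: "1 + q * r \<noteq> 0 \<Longrightarrow> 2 * inner42 ((f *\<^sub>R amat q) ** (g *\<^sub>R bmat r)) (nmat q r) = (1 + q * r)^2 * f * g"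
proof -
  assume d: "1 + q * r \<noteq> 0"
  have "(f *\<^sub>R amat q) ** (g *\<^sub>R bmat r) = (f * g) *\<^sub>R (amat q ** bmat r)"
    by (simp add: mat2_eq_iff algebra_simps)
  then have "2 * inner42 ((f *\<^sub>R amat q) ** (g *\<^sub>R bmat r)) (nmat q r)
      = (f * g) * (1/(1+q*r)) * (2 * inner42 (amat q ** bmat r) (mmat q r))"
    by (simp add: nmat_def inner42_scaleL inner42_scaleR)
  also have "\<dots> = (1 + q * r)^2 * f * g" using d by (simp add: malg8 power3_eq_cube power2_eq_square)
  finally show ?thesis .
qed


lemma bl_entry: "bounded_linear (\<lambda>A::real^2^2. A $ i $ j)"
  using bounded_linear_compose[OF bounded_linear_vec_nth[of j] bounded_linear_vec_nth[of i]] by simp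

lemma entry_deriv:
  fixes F :: "real \<Rightarrow> real^2^2"
  assumes "(F has_vector_derivative D) (at u)"
  shows "((\<lambda>u. F u $ i $ j) has_real_derivative D $ i $ j) (at u)"
  using bounded_linear.has_vector_derivative[OF bl_entry assms]
  by (simp add: has_real_derivative_iff_has_vector_derivative)

lemma det_const:
  fixes F X :: "real \<Rightarrow> real^2^2"
  assumes "open I" "is_interval I" "u0 \<in> I" "det (F u0) = 1"
    and der: "\<And>u. u \<in> I \<Longrightarrow> (F has_vector_derivative F u ** X u) (at u)"
    and tr: "\<And>u. u \<in> I \<Longrightarrow> trace (X u) = 0"
  shows "\<And>u. u \<in> I \<Longrightarrow> det (F u) = 1"
proof -
  have d0: "((\<lambda>u. F u$1$1 * F u$2$2 - F u$1$2 * F u$2$1) has_real_derivative 0) (at u within I)"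
    if u: "u \<in> I" for u
  proof -
    note c = entry_deriv[OF der[OF u]]
    have "((\<lambda>u. F u$1$1 * F u$2$2 - F u$1$2 * F u$2$1) has_real_derivative
        (F u$1$1 * (F u ** X u)$2$2 + (F u ** X u)$1$1 * F u$2$2)
        - (F u$1$2 * (F u ** X u)$2$1 + (F u ** X u)$1$2 * F u$2$1)) (at u)"
      by (intro DERIV_diff DERIV_mult' c)
    moreover have "X u$2$2 = - X u$1$1" using tr[OF u] by (simp add: trace2)
    then have "(F u$1$1 * (F u ** X u)$2$2 + (F u ** X u)$1$1 * F u$2$2)
        - (F u$1$2 * (F u ** X u)$2$1 + (F u ** X u)$1$2 * F u$2$1) = 0"
      by (simp add: algebra_simps)
    ultimately show ?thesis by (simp add: has_field_derivative_at_within)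
  qed
  have "convex I" using assms(2) by (simp add: is_interval_convex)
  from has_field_derivative_zero_constant[OF this d0] obtain c where
    c: "\<forall>x\<in>I. F x$1$1 * F x$2$2 - F x$1$2 * F x$2$1 = c" by blast
  fix u assume "u \<in> I"
  then show "det (F u) = 1" using c assms(3,4) by (simp add: det2)
qed

lemma Ck_scaleR: "Ck k S f \<Longrightarrow> Ck k S G \<Longrightarrow> Ck k S (\<lambda>x. f x *\<^sub>R G x)"
  by (rule Ck_bilinear[OF bounded_bilinear_scaleR])

lemma Ck_mult: "Ck k S (f::real\<Rightarrow>real) \<Longrightarrow> Ck k S g \<Longrightarrow> Ck k S (\<lambda>x. f x * g x)"
  by (rule Ck_bilinear[OF bounded_bilinear_mult])

lemma Ck_mmult: "Ck k S (F::real\<Rightarrow>real^2^2) \<Longrightarrow> Ck k S (G::real\<Rightarrow>real^2^2) \<Longrightarrow> Ck k S (\<lambda>x. F x ** G x)"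
  by (rule Ck_bilinear[OF bb_mult])

lemma Ck_neg: "Ck k S (f::real\<Rightarrow>real) \<Longrightarrow> Ck k S (\<lambda>x. - f x)"
  using Ck_mult[OF Ck_const[of k S "-1"]] by simp

lemma mat2_lin: "mat2 a b c d = a *\<^sub>R mat2 1 0 0 0 + b *\<^sub>R mat2 0 1 0 0 + c *\<^sub>R mat2 0 0 1 0 + d *\<^sub>R mat2 0 0 0 1"
  by (simp add: mat2_eq_iff)

lemma Ck_mat2:
  assumes "Ck k S a" "Ck k S b" "Ck k S c" "Ck k S d"
  shows "Ck k S (\<lambda>x. mat2 (a x) (b x) (c x) (d x))"
proof -
  have s: "Ck k S (\<lambda>x. e x *\<^sub>R M)" if "Ck k S e" for e and M :: "real^2^2"
    using Ck_scaleR[OF that Ck_const[of k S M]] .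
  show ?thesis
    by (subst mat2_lin) (rule Ck_add[OF Ck_add[OF Ck_add]]; rule s; rule assms)
qed

lemma Ck_X:
  assumes "Ck k S q" "Ck k S f"
  shows "Ck k S (\<lambda>u. f u *\<^sub>R mat2 (q u) (- ((q u)^2)) 1 (- (q u)))"
  unfolding power2_eq_square
  by (rule Ck_scaleR[OF assms(2) Ck_mat2[OF assms(1) Ck_neg[OF Ck_mult[OF assms(1) assms(1)]] Ck_const Ck_neg[OF assms(1)]]])

lemma sol_left_exists:
  assumes "open I" "is_interval I" "smooth_on I q" "smooth_on I f"
  shows "\<exists>F. sol_left I q f F"
proof (cases "I = {}")
  case True
  then show ?thesis by (simp add: sol_left_def smooth_on_def)
next
  case False
  then obtain u0 where u0: "u0 \<in> I" by blast
  define X where "X u = f u *\<^sub>R mat2 (q u) (- ((q u)^2)) 1 (- (q u))" for u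
  have CkX: "Ck k I X" for k
    unfolding X_def using assms smooth_iff_Ck by (intro Ck_X) blast+
  obtain X' where X': "\<forall>x\<in>I. (X has_vector_derivative X' x) (at x)"
    using CkX[of 1] by auto
  have cX: "continuous_on I X"
    using X' by (auto intro!: continuous_at_imp_continuous_on has_vector_derivative_continuous)
  obtain F where F: "F u0 = mat 1" "\<And>u. u \<in> I \<Longrightarrow> (F has_vector_derivative F u ** X u) (at u)"
    using ode_exists[OF assms(1,2) u0 cX] by blast
  have det: "det (F u) = 1" if "u \<in> I" for u
    by (rule det_const[OF assms(1,2) u0 _ F(2) _ that]) (auto simp: F(1) X_def trace2)
  have CkF: "Ck k I F" for k
  proof (induction k)
    case 0 then show ?case by simp
  next
    case (Suc k)
    have "Ck k I (\<lambda>u. F u ** X u)" by (intro Ck_mmult Suc CkX)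
    then show ?case using F(2) by (intro Ck.simps(2)[THEN iffD2] exI[of _ "\<lambda>u. F u ** X u"]) auto
  qed
  have "smooth_on I F" using CkF assms(1) smooth_iff_Ck by blast
  moreover have "matrix_inv (F u) ** (F u ** X u) = X u" if "u \<in> I" for u
    using matrix_inv_det1(3)[OF det[OF that]] by (simp add: matrix_mul_assoc)
  ultimately have "sol_left I q f F"
    unfolding sol_left_def using det F(2) by (auto simp: X_def)
  then show ?thesis by blast
qed

lemma bl_adjT: "bounded_linear (\<lambda>A::real^2^2. adj2 (transpose A))"
  unfolding linear_conv_bounded_linear[symmetric] linear_iff
  by (simp add: adj2_def mat2_eq_iff)

lemma bl_T: "bounded_linear (\<lambda>A::real^2^2. transpose A)"
  unfolding linear_conv_bounded_linear[symmetric] linear_iff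
  by (simp add: mat2_eq_iff)

lemma adj2_adj2: "adj2 (adj2 A) = A"
  by (simp add: adj2_def mat2_eq_iff)

lemma sol_right_exists:
  assumes "open J" "is_interval J" "smooth_on J r" "smooth_on J g"
  shows "\<exists>F. sol_right J r g F"
proof -
  obtain H where H: "sol_left J r g H" using sol_left_exists[OF assms] by blast
  define G where "G t = transpose (H t)" for t
  define F where "F t = adj2 (G t)" for t
  have smF: "smooth_on J F"
  proof -
    have "Ck k J H" for k using H assms(1) smooth_iff_Ck unfolding sol_left_def by blast
    then have "Ck k J F" for k unfolding F_def G_def by (intro Ck_linear[OF bl_adjT])
    then show ?thesis using assms(1) smooth_iff_Ck by blast
  qed
  have "det (F v) = 1 \<and> (\<exists>D. ((\<lambda>t. matrix_inv (F t)) has_vector_derivative D) (at v) \<and>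
             D ** F v = g v *\<^sub>R (mat2 (r v) 1 (- ((r v)^2)) (- (r v))))" if v: "v \<in> J" for v
  proof -
    have dG: "det (G t) = 1" if "t \<in> J" for t using H that unfolding sol_left_def G_def by (simp add: det_transpose)
    have dF: "det (F v) = 1" using dG[OF v] by (simp add: F_def det_adj2)
    have iF: "matrix_inv (F t) = G t" if "t \<in> J" for t
      using dG[OF that] matrix_inv_det1(1)[of "F t"] by (simp add: F_def det_adj2 adj2_adj2)
    obtain D0 where D0: "(H has_vector_derivative D0) (at v)"
      "matrix_inv (H v) ** D0 = g v *\<^sub>R (mat2 (r v) (- ((r v)^2)) 1 (- (r v)))"
      using H v unfolding sol_left_def by blast
    have dH: "det (H v) = 1" using H v unfolding sol_left_def by blast
    have D0': "D0 = H v ** (g v *\<^sub>R (mat2 (r v) (- ((r v)^2)) 1 (- (r v))))"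
      unfolding D0(2)[symmetric] using matrix_inv_det1(2)[OF dH] by (simp add: matrix_mul_assoc)
    have "(G has_vector_derivative transpose D0) (at v)"
      unfolding G_def using bounded_linear.has_vector_derivative[OF bl_T D0(1)] .
    then have "((\<lambda>t. matrix_inv (F t)) has_vector_derivative transpose D0) (at v)"
      by (rule has_vector_derivative_transform_within_open[OF _ assms(1) v]) (use iF in auto)
    moreover have "transpose D0 ** F v = g v *\<^sub>R (mat2 (r v) 1 (- ((r v)^2)) (- (r v)))"
    proof -
      have "G v ** F v = mat 1" using matrix_inv_det1(2)[OF dG[OF v]] matrix_inv_det1(1)[OF dG[OF v]]
        by (simp add: F_def)
      moreover have "transpose D0 = g v *\<^sub>R (mat2 (r v) 1 (- ((r v)^2)) (- (r v))) ** G v"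
        unfolding D0' G_def by (simp add: mat2_eq_iff algebra_simps)
      ultimately show ?thesis by (simp add: matrix_mul_assoc[symmetric])
    qed
    ultimately show ?thesis using dF by blast
  qed
  then have "sol_right J r g F" unfolding sol_right_def using smF by blast
  then show ?thesis by blast
qed


lemma continuous_on_mat2:
  assumes "continuous_on S a" "continuous_on S b" "continuous_on S c" "continuous_on S d"
  shows "continuous_on S (\<lambda>x. mat2 (a x) (b x) (c x) (d x))"
  by (subst mat2_lin) (intro continuous_intros assms)

lemma geo_core:
  fixes L R :: "real \<Rightarrow> real^2^2" and q f r g :: "real \<Rightarrow> real" and I J :: "real set"
  assumes oI: "open I" and oJ: "open J"
    and dL: "\<And>u. u \<in> I \<Longrightarrow> det (L u) = 1"
      "\<And>u. u \<in> I \<Longrightarrow> (L has_vector_derivative L u ** (f u *\<^sub>R amat (q u))) (at u)"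
    and dR: "\<And>v. v \<in> J \<Longrightarrow> det (R v) = 1"
      "\<And>v. v \<in> J \<Longrightarrow> (R has_vector_derivative (g v *\<^sub>R bmat (r v)) ** R v) (at v)"
    and cq: "continuous_on I q" and cr: "continuous_on J r"
    and nz: "\<And>u v. u \<in> I \<Longrightarrow> v \<in> J \<Longrightarrow> f u * g v * (1 + q u * r v)^2 \<noteq> 0"
  shows "cmc_conformal_timelike (I \<times> J) (\<lambda>(u, v). L u ** R v) \<and>
         metric_conformal_to (I \<times> J) (\<lambda>(u, v). L u ** R v) q f r g"
proof -
  define P where "P = (\<lambda>(u, v). L u ** R v)"
  define A where "A u = f u *\<^sub>R amat (q u)" for u
  define B where "B v = g v *\<^sub>R bmat (r v)" for v
  note blL = bounded_bilinear.bounded_linear_left[OF bb_mult]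
  note blR = bounded_bilinear.bounded_linear_right[OF bb_mult]
  have P_eq: "P = (\<lambda>p. L (fst p) ** R (snd p))" by (auto simp: P_def split_beta')
  have puP: "pu P (u, t) = L u ** A u ** R t" if "u \<in> I" for u t
  proof -
    have "((\<lambda>s. L s ** R t) has_vector_derivative (L u ** A u) ** R t) (at u)"
      using bounded_linear.has_vector_derivative[OF blL dL(2)[OF that]] by (simp add: A_def)
    then show ?thesis unfolding pu_def P_eq by (simp add: vector_derivative_at)
  qed
  have pvP: "pv P (u, v) = L u ** (B v ** R v)" if "v \<in> J" for u v
  proof -
    have "((\<lambda>t. L u ** R t) has_vector_derivative L u ** (B v ** R v)) (at v)"
      using bounded_linear.has_vector_derivative[OF blR dR(2)[OF that]] by (simp add: B_def)
    then show ?thesis unfolding pv_def P_eq by (simp add: vector_derivative_at)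
  qed
  have dpu: "((\<lambda>t. pu P (u, t)) has_vector_derivative (L u ** A u) ** (B v ** R v)) (at v)"
    if u: "u \<in> I" and v: "v \<in> J" for u v
  proof -
    have "((\<lambda>t. (L u ** A u) ** R t) has_vector_derivative (L u ** A u) ** (B v ** R v)) (at v)"
      using bounded_linear.has_vector_derivative[OF blR dR(2)[OF v]] by (simp add: B_def)
    then show ?thesis using puP[OF u] by simp
  qed
  have pvpu: "pv (pu P) (u, v) = L u ** (A u ** B v) ** R v" if u: "u \<in> I" and v: "v \<in> J" for u v
    using vector_derivative_at[OF dpu[OF u v]] unfolding pv_def by (simp add: matrix_mul_assoc)
  have Pdiff: "P differentiable (at (u, v))" if u: "u \<in> I" and v: "v \<in> J" for u v
  proof -
    have "L differentiable (at (fst (u, v)))" using dL(2)[OF u] by (auto intro: differentiableI_vector)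
    then have "(\<lambda>p. L (fst p)) differentiable (at (u, v))"
      by (rule differentiable_compose) (simp add: bounded_linear_imp_differentiable bounded_linear_fst)
    then obtain DL where DL: "((\<lambda>p. L (fst p)) has_derivative DL) (at (u, v))"
      unfolding differentiable_def by blast
    have "R differentiable (at (snd (u, v)))" using dR(2)[OF v] by (auto intro: differentiableI_vector)
    then have "(\<lambda>p. R (snd p)) differentiable (at (u, v))"
      by (rule differentiable_compose) (simp add: bounded_linear_imp_differentiable bounded_linear_snd)
    then obtain DR where DR: "((\<lambda>p. R (snd p)) has_derivative DR) (at (u, v))"
      unfolding differentiable_def by blast
    show ?thesis unfolding P_eq
      using bounded_bilinear.FDERIV[OF bb_mult DL DR] by (rule differentiableI)
  qed
  define N where "N p = L (fst p) ** nmat (q (fst p)) (r (snd p)) ** R (snd p)" for p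
  have cL: "continuous_on I L"
    using dL(2) by (auto intro!: continuous_at_imp_continuous_on has_vector_derivative_continuous)
  have cR: "continuous_on J R"
    using dR(2) by (auto intro!: continuous_at_imp_continuous_on has_vector_derivative_continuous)
  have cLf: "continuous_on (I \<times> J) (\<lambda>p. L (fst p))"
    by (rule continuous_on_compose2[OF cL continuous_on_fst[OF continuous_on_id]]) auto
  have cRs: "continuous_on (I \<times> J) (\<lambda>p. R (snd p))"
    by (rule continuous_on_compose2[OF cR continuous_on_snd[OF continuous_on_id]]) auto
  have cqf: "continuous_on (I \<times> J) (\<lambda>p. q (fst p))"
    by (rule continuous_on_compose2[OF cq continuous_on_fst[OF continuous_on_id]]) auto
  have crs: "continuous_on (I \<times> J) (\<lambda>p. r (snd p))"
    by (rule continuous_on_compose2[OF cr continuous_on_snd[OF continuous_on_id]]) auto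
  have d0: "1 + q u * r v \<noteq> 0" if "u \<in> I" "v \<in> J" for u v using nz[OF that] by auto
  have cn: "continuous_on (I \<times> J) (\<lambda>p. nmat (q (fst p)) (r (snd p)))"
    unfolding nmat_def mmat_def
    by (intro continuous_intros continuous_on_mat2 cqf crs) (auto simp: d0)
  have cN: "continuous_on (I \<times> J) N"
    unfolding N_def
    by (intro bounded_bilinear.continuous_on[OF bb_mult] cLf cRs cn)
  have main: "P differentiable (at p) \<and> det (P p) = 1
        \<and> (\<lambda>t. pu P (fst p, t)) differentiable (at (snd p))
        \<and> inner42 (pu P p) (pu P p) = 0 \<and> inner42 (pv P p) (pv P p) = 0
        \<and> inner42 (pu P p) (pv P p) \<noteq> 0
        \<and> inner42 (N p) (N p) = 1 \<and> inner42 (N p) (P p) = 0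
        \<and> inner42 (N p) (pu P p) = 0 \<and> inner42 (N p) (pv P p) = 0
        \<and> meancurv P N p = 1
        \<and> 2 * inner42 (pu P p) (pv P p) = 1 * ((1 + q (fst p) * r (snd p))^2 * f (fst p) * g (snd p))"
    if p: "p \<in> I \<times> J" for p
  proof -
    obtain u v where uv: "p = (u, v)" "u \<in> I" "v \<in> J" using p by auto
    have inv: "inner42 (L u ** X ** R v) (L u ** Y ** R v) = inner42 X Y" for X Y
      by (rule inner42_inv[OF dL(1)[OF uv(2)] dR(1)[OF uv(3)]])
    have e1: "pu P p = L u ** A u ** R v" using puP[OF uv(2)] uv by simp
    have e2: "pv P p = L u ** B v ** R v" using pvP[OF uv(3)] uv by (simp add: matrix_mul_assoc)
    have e3: "P p = L u ** mat 1 ** R v" using uv by (simp add: P_def)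
    have e4: "pv (pu P) p = L u ** (A u ** B v) ** R v" using pvpu[OF uv(2,3)] uv by simp
    have e5: "N p = L u ** nmat (q u) (r v) ** R v" using uv by (simp add: N_def)
    have d: "1 + q u * r v \<noteq> 0" using d0[OF uv(2,3)] .
    have nz': "(1 + q u * r v)^2 * f u * g v \<noteq> 0" using nz[OF uv(2,3)] by (simp add: mult_ac)
    have i3: "2 * inner42 (A u) (B v) = (1 + q u * r v)^2 * f u * g v"
      unfolding A_def B_def by (rule alg3)
    have i8: "2 * inner42 (A u ** B v) (nmat (q u) (r v)) = (1 + q u * r v)^2 * f u * g v"
      unfolding A_def B_def by (rule alg8[OF d])
    have "P differentiable (at p)" using Pdiff[OF uv(2,3)] uv by simp
    moreover have "det (P p) = 1" using e3 dL(1)[OF uv(2)] dR(1)[OF uv(3)] by (simp add: det_mul)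
    moreover have "(\<lambda>t. pu P (fst p, t)) differentiable (at (snd p))"
      using dpu[OF uv(2,3)] uv by (auto intro: differentiableI_vector)
    moreover have "inner42 (pu P p) (pu P p) = 0" unfolding e1 inv by (simp add: A_def alg1)
    moreover have "inner42 (pv P p) (pv P p) = 0" unfolding e2 inv by (simp add: B_def alg2)
    moreover have "inner42 (pu P p) (pv P p) \<noteq> 0" unfolding e1 e2 inv using i3 nz' by auto
    moreover have "inner42 (N p) (N p) = 1" unfolding e5 inv by (rule alg4[OF d])
    moreover have "inner42 (N p) (P p) = 0" unfolding e5 e3 inv by (rule alg5)
    moreover have "inner42 (N p) (pu P p) = 0" unfolding e5 e1 inv A_def by (rule alg6)
    moreover have "inner42 (N p) (pv P p) = 0" unfolding e5 e2 inv B_def by (rule alg7)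
    moreover have "meancurv P N p = 1"
      unfolding meancurv_def e1 e2 e4 e5 inv using i3 i8 nz' by simp
    moreover have "2 * inner42 (pu P p) (pv P p) = 1 * ((1 + q (fst p) * r (snd p))^2 * f (fst p) * g (snd p))"
      unfolding e1 e2 inv using i3 uv by simp
    ultimately show ?thesis by blast
  qed
  have "cmc_conformal_timelike (I \<times> J) P"
    unfolding cmc_conformal_timelike_def
  proof (intro conjI ballI exI[of _ N])
    show "continuous_on (I \<times> J) N" by (rule cN)
  qed (use main in blast)+
  moreover have "metric_conformal_to (I \<times> J) P q f r g"
    unfolding metric_conformal_to_def by (rule exI[of _ "\<lambda>p. 1"]) (use main in auto)
  ultimately show ?thesis by (simp add: P_def)
qed


lemma sol_left_D:
  assumes "sol_left I q f F" "u \<in> I"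
  shows "det (F u) = 1 \<and> (F has_vector_derivative F u ** (f u *\<^sub>R amat (q u))) (at u)"
proof -
  obtain D where D: "det (F u) = 1" "(F has_vector_derivative D) (at u)"
    "matrix_inv (F u) ** D = f u *\<^sub>R (mat2 (q u) (- ((q u)^2)) 1 (- (q u)))"
    using assms unfolding sol_left_def by blast
  have "D = F u ** (matrix_inv (F u) ** D)"
    using matrix_inv_det1(2)[OF D(1)] by (simp add: matrix_mul_assoc)
  then have "D = F u ** (f u *\<^sub>R amat (q u))" using D(3) by (simp add: amat_def)
  then show ?thesis using D by simp
qed

lemma sol_left_T:
  assumes "sol_left J r g F" "v \<in> J"
  shows "det (transpose (F v)) = 1 \<and>
    ((\<lambda>t. transpose (F t)) has_vector_derivative (g v *\<^sub>R bmat (r v)) ** transpose (F v)) (at v)"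
proof -
  have h: "det (F v) = 1" "(F has_vector_derivative F v ** (g v *\<^sub>R amat (r v))) (at v)"
    using sol_left_D[OF assms] by auto
  have "((\<lambda>t. transpose (F t)) has_vector_derivative transpose (F v ** (g v *\<^sub>R amat (r v)))) (at v)"
    using bounded_linear.has_vector_derivative[OF bl_T h(2)] .
  moreover have "transpose (F v ** (g v *\<^sub>R amat (r v))) = (g v *\<^sub>R bmat (r v)) ** transpose (F v)"
    by (simp add: mat2_eq_iff amat_def bmat_def algebra_simps)
  ultimately show ?thesis using h(1) by (simp add: det_transpose)
qed

lemma sol_right_D:
  assumes "sol_right J r g F" "v \<in> J"
  shows "det (matrix_inv (F v)) = 1 \<and>
    ((\<lambda>t. matrix_inv (F t)) has_vector_derivative (g v *\<^sub>R bmat (r v)) ** matrix_inv (F v)) (at v)"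
proof -
  obtain D where D: "det (F v) = 1" "((\<lambda>t. matrix_inv (F t)) has_vector_derivative D) (at v)"
    "D ** F v = g v *\<^sub>R (mat2 (r v) 1 (- ((r v)^2)) (- (r v)))"
    using assms unfolding sol_right_def by blast
  have "D = (D ** F v) ** matrix_inv (F v)"
    using matrix_inv_det1(2)[OF D(1)] by (simp add: matrix_mul_assoc[symmetric])
  then have "D = (g v *\<^sub>R bmat (r v)) ** matrix_inv (F v)" using D(3) by (simp add: bmat_def)
  moreover have "det (matrix_inv (F v)) = 1" using D(1) by (simp add: matrix_inv_det1(1) det_adj2)
  ultimately show ?thesis using D(2) by simp
qed

theorem mainTheorem8:
  fixes I J :: "real set" and q f r g :: "real \<Rightarrow> real"
  assumes "open I" "is_interval I" "open J" "is_interval J"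
    and "smooth_on I q" "smooth_on I f" "smooth_on J r" "smooth_on J g"
    and "\<forall>u\<in>I. \<forall>v\<in>J. f u * g v * (1 + q u * r v)^2 \<noteq> 0"
  shows "((\<exists>F1 F2. sol_left I q f F1 \<and> sol_left J r g F2) \<and>
          (\<forall>F1 F2. sol_left I q f F1 \<and> sol_left J r g F2 \<longrightarrow>
             cmc_conformal_timelike (I \<times> J) (\<lambda>(u, v). F1 u ** transpose (F2 v)) \<and>
             metric_conformal_to (I \<times> J) (\<lambda>(u, v). F1 u ** transpose (F2 v)) q f r g))
       \<and> ((\<exists>F1 F2. sol_left I q f F1 \<and> sol_right J r g F2) \<and>
          (\<forall>F1 F2. sol_left I q f F1 \<and> sol_right J r g F2 \<longrightarrow>
             cmc_conformal_timelike (I \<times> J) (\<lambda>(u, v). F1 u ** matrix_inv (F2 v)) \<and>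
             metric_conformal_to (I \<times> J) (\<lambda>(u, v). F1 u ** matrix_inv (F2 v)) q f r g))"
proof -
  obtain F1 where F1: "sol_left I q f F1" using sol_left_exists[OF assms(1,2,5,6)] by blast
  obtain F2 where F2: "sol_left J r g F2" using sol_left_exists[OF assms(3,4,7,8)] by blast
  obtain G2 where G2: "sol_right J r g G2" using sol_right_exists[OF assms(3,4,7,8)] by blast
  have cq: "continuous_on I q" using smooth_cont[OF assms(1,5)] .
  have cr: "continuous_on J r" using smooth_cont[OF assms(3,7)] .
  have nz: "\<And>u v. u \<in> I \<Longrightarrow> v \<in> J \<Longrightarrow> f u * g v * (1 + q u * r v)^2 \<noteq> 0" using assms(9) by blast
  have part1: "cmc_conformal_timelike (I \<times> J) (\<lambda>(u, v). H1 u ** transpose (H2 v)) \<and>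
             metric_conformal_to (I \<times> J) (\<lambda>(u, v). H1 u ** transpose (H2 v)) q f r g"
    if H: "sol_left I q f H1" "sol_left J r g H2" for H1 H2
    using geo_core[OF assms(1,3), of H1 f q "\<lambda>t. transpose (H2 t)" g r, OF _ _ _ _ cq cr nz]
      sol_left_D[OF H(1)] sol_left_T[OF H(2)] by blast
  have part2: "cmc_conformal_timelike (I \<times> J) (\<lambda>(u, v). H1 u ** matrix_inv (H2 v)) \<and>
             metric_conformal_to (I \<times> J) (\<lambda>(u, v). H1 u ** matrix_inv (H2 v)) q f r g"
    if H: "sol_left I q f H1" "sol_right J r g H2" for H1 H2
    using geo_core[OF assms(1,3), of H1 f q "\<lambda>t. matrix_inv (H2 t)" g r, OF _ _ _ _ cq cr nz]
      sol_left_D[OF H(1)] sol_right_D[OF H(2)] by blast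
  show ?thesis using F1 F2 G2 part1 part2 by blast
qed


end
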